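(* Suppose $\mathcal U(x)=\{(u_0,u_1)\in(\mathbb R^{n^0_u}_+\times\mathbb U_{d_0})\times(\mathbb R^{n^1_u}_+\times\mathbb U_{d_1}): F_0(x)u_0+F_1(x)u_1\le h+Gx\}$ and let $\mathcal U_1(x,u_0)=\{u_1\in\mathbb R^{n^1_u}_+\times\mathbb U_{d_1}: F_1(x)u_1\le h+Gx-F_0(x)u_0\}$. Define $w_{(u_0,u_1)}=\min_{x\in\mathcal X,\ (u_0,u_1')\in\mathcal U(x)}\Big[c_1x+\max_{u_1\in\mathcal U_1(x,u_0)}\min_{y\in\mathcal Y(x,(u_0,u_1))}c_2y\Big]$, where $u_1'$ is a copy (replicate) of the variable $u_1$ used only in the outer minimization. Then $w_R\le w_{(u_0,u_1)}\le w^*$, and if $w_{(u_0,u_1)}=+\infty$ then $w^*=+\infty$.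
   Context: $\mathcal X=\{x\in\mathbb R^{n_x}_+\times\mathbb Z^{m_x}_+: Ax\ge b\}$; $\mathbb U_{d_0},\mathbb U_{d_1}$ are bounded sets of nonnegative integer vectors; $F_0(x),F_1(x)$ depend on $x$; $\mathcal Y(x,u)=\{y=(y_c,y_d)\in\mathbb R^{n_y}_+\times\mathbb Y_d: B_{2,c}y_c+B_{2,d}y_d\ge d-B_1x-Eu\}$ with $\mathbb Y_d\subseteq\mathbb Z^{m_y}_+$ bounded; $c_1,c_2$ row vectors; a minimum over an empty set is $+\infty$. $w^*=\min_{x\in\mathcal X}\big[c_1x+\max_{u\in\mathcal U(x)}\min_{y\in\mathcal Y(x,u)}c_2y\big]$ and $w_R=\min\{c_1x+c_2y: x\in\mathcal X,u\in\mathcal U(x),y\in\mathcal Y(x,u)\}$. Standing assumptions: $\mathcal U(x)\neq\emptyset$ and bounded for all $x\in\mathcal X$, and $w_R>-\infty$. *)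

theory Defs
  imports "HOL-Analysis.Analysis"
begin

text \<open>Vectors of mixed continuous/discrete variables are indexed by a sum type
  'c + 'd: the Inl-indices are the continuous components, the Inr-indices the
  discrete ones. Vector inequalities are componentwise (library order on vec).\<close>

definition nonneg_int_vecs :: "(real^'d::finite) set" where
  "nonneg_int_vecs = {v. \<forall>j. v $ j \<in> \<int> \<and> 0 \<le> v $ j}"

definition dpart :: "real^('c::finite + 'd::finite) \<Rightarrow> real^'d" where
  "dpart u = (\<chi> j. u $ Inr j)"

definition mixset :: "(real^'d::finite) set \<Rightarrow> (real^('c::finite + 'd)) set" where
  "mixset D = {u. (\<forall>j. 0 \<le> u $ Inl j) \<and> dpart u \<in> D}"

definition vjoin :: "real^'a::finite \<Rightarrow> real^'b::finite \<Rightarrow> real^('a + 'b)" where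
  "vjoin u v = (\<chi> i. case i of Inl a \<Rightarrow> u $ a | Inr b \<Rightarrow> v $ b)"

definition Xset :: "real^('nx::finite + 'mx::finite)^'r::finite \<Rightarrow> real^'r \<Rightarrow> (real^('nx + 'mx)) set" where
  "Xset A b = {x. (\<forall>i. 0 \<le> x $ i) \<and> (\<forall>j. x $ Inr j \<in> \<int>) \<and> b \<le> A *v x}"

definition Uset ::
  "('x \<Rightarrow> real^('n0::finite + 'd0::finite)^'k::finite) \<Rightarrow> ('x \<Rightarrow> real^('n1::finite + 'd1::finite)^'k) \<Rightarrow> real^'k \<Rightarrow>
   ('x \<Rightarrow> real^'k) \<Rightarrow> (real^'d0) set \<Rightarrow> (real^'d1) set \<Rightarrow> 'x \<Rightarrow>
   ((real^('n0 + 'd0)) \<times> (real^('n1 + 'd1))) set" where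
  "Uset F0 F1 h Gx Ud0 Ud1 x =
     {(u0, u1). u0 \<in> mixset Ud0 \<and> u1 \<in> mixset Ud1 \<and>
                F0 x *v u0 + F1 x *v u1 \<le> h + Gx x}"

definition U1set ::
  "('x \<Rightarrow> real^('n0::finite + 'd0::finite)^'k::finite) \<Rightarrow> ('x \<Rightarrow> real^('n1::finite + 'd1::finite)^'k) \<Rightarrow> real^'k \<Rightarrow>
   ('x \<Rightarrow> real^'k) \<Rightarrow> (real^'d1) set \<Rightarrow> 'x \<Rightarrow> real^('n0 + 'd0) \<Rightarrow>
   (real^('n1 + 'd1)) set" where
  "U1set F0 F1 h Gx Ud1 x u0 =
     {u1. u1 \<in> mixset Ud1 \<and> F1 x *v u1 \<le> h + Gx x - F0 x *v u0}"

definition Yset ::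
  "real^'x::finite^'s::finite \<Rightarrow> real^('ny::finite + 'my::finite)^'s \<Rightarrow> real^'u::finite^'s \<Rightarrow> real^'s \<Rightarrow> (real^'my) set \<Rightarrow>
   real^'x \<Rightarrow> real^'u \<Rightarrow> (real^('ny + 'my)) set" where
  "Yset B1 B2 E d Yd x u = {y. y \<in> mixset Yd \<and> d - B1 *v x - E *v u \<le> B2 *v y}"

text \<open>inner value min_{y in Y(x,u)} c2 y (infimum in the extended reals; empty = +infinity)\<close>
definition recourse ::
  "real^'x::finite^'s::finite \<Rightarrow> real^('ny::finite + 'my::finite)^'s \<Rightarrow> real^'u::finite^'s \<Rightarrow> real^'s \<Rightarrow> (real^'my) set \<Rightarrow>
   real^('ny + 'my) \<Rightarrow> real^'x \<Rightarrow> real^'u \<Rightarrow> ereal" where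
  "recourse B1 B2 E d Yd c2 x u = (INF y \<in> Yset B1 B2 E d Yd x u. ereal (c2 \<bullet> y))"

end

theory Submission
  imports Defs
begin

lemma ereal_le_add_INF: "(a::ereal) \<le> ereal c + (INF y\<in>Y. ereal (g y))" if "\<And>y. y\<in>Y \<Longrightarrow> a \<le> ereal (c + g y)"
proof -
  have "a - ereal c \<le> (INF y\<in>Y. ereal (g y))"
  proof (rule INF_greatest)
    fix y assume "y\<in>Y" then show "a - ereal c \<le> ereal (g y)" using that[of y]
      by (simp add: ereal_minus_le add.commute)
  qed
  then show ?thesis by (simp add: ereal_minus_le add.commute)
qed
lemma vec_le_shift: "(u::real^'k) + v \<le> w \<longleftrightarrow> v \<le> w - u" by (simp add: less_eq_vec_def algebra_simps)

theorem corollary7: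
  fixes A :: "real^('nx::finite + 'mx::finite)^('r::finite)" and b :: "real^'r"
    and F0 :: "real^('nx + 'mx) \<Rightarrow> real^('n0::finite + 'd0::finite)^('k::finite)"
    and F1 :: "real^('nx + 'mx) \<Rightarrow> real^('n1::finite + 'd1::finite)^'k"
    and h :: "real^'k" and G :: "real^('nx + 'mx)^'k"
    and Ud0 :: "(real^'d0) set" and Ud1 :: "(real^'d1) set"
    and B1 :: "real^('nx + 'mx)^('s::finite)"
    and B2 :: "real^('ny::finite + 'my::finite)^'s"
    and E :: "real^(('n0 + 'd0) + ('n1 + 'd1))^'s"
    and d :: "real^'s" and Yd :: "(real^'my) set"
    and c1 :: "real^('nx + 'mx)" and c2 :: "real^('ny + 'my)"
    and wstar wR wU :: ereal
  defines "X \<equiv> Xset A b"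
    and "U \<equiv> Uset F0 F1 h (\<lambda>x. G *v x) Ud0 Ud1"
    and "U1 \<equiv> U1set F0 F1 h (\<lambda>x. G *v x) Ud1"
    and "Q \<equiv> recourse B1 B2 E d Yd c2"
  assumes Ud0: "Ud0 \<subseteq> nonneg_int_vecs" "bounded Ud0"
    and Ud1: "Ud1 \<subseteq> nonneg_int_vecs" "bounded Ud1"
    and Yd: "Yd \<subseteq> nonneg_int_vecs" "bounded Yd"
    and U_ne: "\<And>x. x \<in> X \<Longrightarrow> U x \<noteq> {}"
    and U_bdd: "\<And>x. x \<in> X \<Longrightarrow> bounded (U x)"
    and wstar_def: "wstar = (INF x \<in> X. ereal (c1 \<bullet> x) + (SUP (u0, u1) \<in> U x. Q x (vjoin u0 u1)))"
    and wR_def: "wR = Inf {ereal (c1 \<bullet> x + c2 \<bullet> y) | x u0 u1 y.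
                  x \<in> X \<and> (u0, u1) \<in> U x \<and> y \<in> Yset B1 B2 E d Yd x (vjoin u0 u1)}"
    and wR_fin: "wR > -\<infinity>"
    and wU_def: "wU = Inf {ereal (c1 \<bullet> x) + (SUP u1 \<in> U1 x u0. Q x (vjoin u0 u1)) | x u0 u1'.
                  x \<in> X \<and> (u0, u1') \<in> U x}"
  shows "wR \<le> wU \<and> wU \<le> wstar \<and> (wU = \<infinity> \<longrightarrow> wstar = \<infinity>)"
  proof -
  have U1eq: "u1 \<in> U1 x u0 \<longleftrightarrow> (u0, u1) \<in> U x" if "u0 \<in> mixset Ud0" for x u0 u1
    using that unfolding U1_def U_def U1set_def Uset_def by (auto simp: vec_le_shift)
  have A: "wU \<le> wstar"
    unfolding wstar_def
  proof (rule INF_greatest)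
    fix x assume x: "x \<in> X"
    then obtain u0 u1' where u: "(u0, u1') \<in> U x" using U_ne by fastforce
    hence m: "u0 \<in> mixset Ud0" unfolding U_def Uset_def by auto
    have "(SUP u1 \<in> U1 x u0. Q x (vjoin u0 u1)) \<le> (SUP (u0, u1) \<in> U x. Q x (vjoin u0 u1))"
    proof (rule SUP_least)
      fix u1 assume "u1 \<in> U1 x u0"
      hence "(u0, u1) \<in> U x" using U1eq[OF m] by simp
      thus "Q x (vjoin u0 u1) \<le> (SUP (u0, u1) \<in> U x. Q x (vjoin u0 u1))"
        by (rule SUP_upper2) simp
    qed
    hence "ereal (c1 \<bullet> x) + (SUP u1 \<in> U1 x u0. Q x (vjoin u0 u1))
        \<le> ereal (c1 \<bullet> x) + (SUP (u0, u1) \<in> U x. Q x (vjoin u0 u1))"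
      by (rule add_left_mono)
    moreover have "wU \<le> ereal (c1 \<bullet> x) + (SUP u1 \<in> U1 x u0. Q x (vjoin u0 u1))"
      unfolding wU_def by (rule Inf_lower) (use x u in blast)
    ultimately show "wU \<le> ereal (c1 \<bullet> x) + (SUP (u0, u1) \<in> U x. Q x (vjoin u0 u1))"
      by (rule order_trans[rotated])
  qed
  have B: "wR \<le> wU"
    unfolding wU_def
  proof (rule Inf_greatest, clarify)
    fix x u0 u1' assume x: "x \<in> X" and u: "(u0, u1') \<in> U x"
    hence m: "u0 \<in> mixset Ud0" unfolding U_def Uset_def by auto
    have u1: "u1' \<in> U1 x u0" using U1eq[OF m] u by simp
    have "wR \<le> ereal (c1 \<bullet> x) + Q x (vjoin u0 u1')"
      unfolding Q_def recourse_def
    proof (rule ereal_le_add_INF)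
      fix y assume "y \<in> Yset B1 B2 E d Yd x (vjoin u0 u1')"
      thus "wR \<le> ereal (c1 \<bullet> x + c2 \<bullet> y)" unfolding wR_def
        by (intro Inf_lower) (use x u in blast)
    qed
    also have "\<dots> \<le> ereal (c1 \<bullet> x) + (SUP u1 \<in> U1 x u0. Q x (vjoin u0 u1))"
      by (rule add_left_mono, rule SUP_upper[OF u1])
    finally show "wR \<le> ereal (c1 \<bullet> x) + (SUP u1 \<in> U1 x u0. Q x (vjoin u0 u1))" .
  qed
  show ?thesis using A B by auto
qed

end
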